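(* Let $(H,\partial)$ be a right (respectively extended) Cartan–Eilenberg system. The right couple $(A'',E^1)$ converges conditionally to the limit, i.e. $\operatorname{colim}_sH(s,\infty)=0$, if and only if the canonical map $\bar\eta\colon\operatorname{colim}_jH(i,j)\to H(i,\infty)$ is an isomorphism for some $i\in\mathbb{Z}$ (respectively some $i\in\mathbb{Z}\cup\{-\infty\}$); in that case it is an isomorphism for every $i\in\mathbb{Z}$ (respectively every $i\in\mathbb{Z}\cup\{-\infty\}$).
   Context: Let $\mathcal{A}$ be the category of $\mathbb{Z}$-graded $R$-modules. For a linearly ordered set $\mathcal{I}$, an $\mathcal{I}$-system $(H,\partial)$ consists of objects $H(i,j)$ for $i\le j$ in $\mathcal{I}$, functorial morphisms $\eta\colon H(i,j)\to H(i',j')$ (internal degree $0$) for $i\le i'$, $j\le j'$, and natural morphisms $\partial\colon H(j,k)\to H(i,j)$ (internal degree $-1$) for $i\le j\le k$, with $H(i,j)\xrightarrow{\eta}H(i,k)\xrightarrow{\eta}H(j,k)\xrightarrow{\partial}H(i,j)$ exact at each vertex. A right Cartan–Eilenberg system is a $(\mathbb{Z}\cup\{+\infty\})$-system; an extended Cartan–Eilenberg system is a $(\mathbb{Z}\cup\{\pm\infty\})$-system ($\pm\infty$ greatest/least elements). Right couple: $A''_s=H(s,\infty)$, $E^1_s=H(s-1,s)$, $\alpha_s=\eta$, $\beta_s=\partial\colon H(s,\infty)\to H(s-1,s)$, $\gamma_s=\eta\colon H(s-1,s)\to H(s-1,\infty)$. An exact couple converges conditionally to the limit if $\operatorname{colim}_sA_s=0$.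 The colimit $\operatorname{colim}_jH(i,j)$ is over integers $j\to\infty$ along $\eta$, and $\bar\eta$ is induced by $\eta\colon H(i,j)\to H(i,\infty)$. *)

theory Defs
  imports Main
begin

datatype ext = NegInf | Fin int | PosInf

instantiation ext :: linorder
begin

fun less_eq_ext :: "ext \<Rightarrow> ext \<Rightarrow> bool" where
  "less_eq_ext NegInf y = True"
| "less_eq_ext (Fin a) NegInf = False"
| "less_eq_ext (Fin a) (Fin b) = (a \<le> b)"
| "less_eq_ext (Fin a) PosInf = True"
| "less_eq_ext PosInf y = (y = PosInf)"

definition less_ext :: "ext \<Rightarrow> ext \<Rightarrow> bool" where
  "less_ext x y = (x \<le> y \<and> \<not> y \<le> x)"

instance
proof
  fix x y z :: ext
  show "(x < y) = (x \<le> y \<and> \<not> y \<le> x)" by (simp add: less_ext_def)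
  show "x \<le> x" by (cases x) auto
  show "x \<le> y \<Longrightarrow> y \<le> z \<Longrightarrow> x \<le> z"
    by (cases x; cases y; cases z) auto
  show "x \<le> y \<Longrightarrow> y \<le> x \<Longrightarrow> x = y"
    by (cases x; cases y) auto
  show "x \<le> y \<or> y \<le> x"
    by (cases x; cases y) auto
qed

end

definition right_index :: "ext set" where
  "right_index = UNIV - {NegInf}"

definition extended_index :: "ext set" where
  "extended_index = UNIV"

section \<open>Modules over a ring R (all modules live inside one ambient R-module)\<close>

definition is_module :: "('r::ring_1 \<Rightarrow> 'm::ab_group_add \<Rightarrow> 'm) \<Rightarrow> bool" where
  "is_module sc \<longleftrightarrow>
     (\<forall>a x y. sc a (x + y) = sc a x + sc a y) \<and>
     (\<forall>a b x. sc (a + b) x = sc a x + sc b x) \<and>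
     (\<forall>a b x. sc (a * b) x = sc a (sc b x)) \<and>
     (\<forall>x. sc 1 x = x)"

definition submodule :: "('r::ring_1 \<Rightarrow> 'm::ab_group_add \<Rightarrow> 'm) \<Rightarrow> 'm set \<Rightarrow> bool" where
  "submodule sc M \<longleftrightarrow> 0 \<in> M \<and> (\<forall>x\<in>M. \<forall>y\<in>M. x + y \<in> M) \<and> (\<forall>x\<in>M. - x \<in> M)
     \<and> (\<forall>a. \<forall>x\<in>M. sc a x \<in> M)"

definition linmap :: "('r::ring_1 \<Rightarrow> 'm::ab_group_add \<Rightarrow> 'm) \<Rightarrow> 'm set \<Rightarrow> 'm set \<Rightarrow> ('m \<Rightarrow> 'm) \<Rightarrow> bool" where
  "linmap sc M N f \<longleftrightarrow> f ` M \<subseteq> N \<and> (\<forall>x\<in>M. \<forall>y\<in>M. f (x + y) = f x + f y)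
     \<and> (\<forall>a. \<forall>x\<in>M. f (sc a x) = sc a (f x))"

definition exact_at :: "'m::zero set \<Rightarrow> 'm set \<Rightarrow> ('m \<Rightarrow> 'm) \<Rightarrow> ('m \<Rightarrow> 'm) \<Rightarrow> bool" where
  "exact_at M N f g \<longleftrightarrow> {y \<in> N. g y = 0} = f ` M"

text \<open>A Z-graded module is a family of submodules @ degree n (H i j n is the
  degree-n part of H(i,j)). eta i j i' j' n : H(i,j)_n \<rightarrow> H(i',j')_n,
  del i j k n : H(j,k)_n \<rightarrow> H(i,j)_(n-1).\<close>

definition I_system ::
  "('r::ring_1 \<Rightarrow> 'm::ab_group_add \<Rightarrow> 'm) \<Rightarrow> ext set \<Rightarrow> (ext \<Rightarrow> ext \<Rightarrow> int \<Rightarrow> 'm set)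
   \<Rightarrow> (ext \<Rightarrow> ext \<Rightarrow> ext \<Rightarrow> ext \<Rightarrow> int \<Rightarrow> 'm \<Rightarrow> 'm)
   \<Rightarrow> (ext \<Rightarrow> ext \<Rightarrow> ext \<Rightarrow> int \<Rightarrow> 'm \<Rightarrow> 'm) \<Rightarrow> bool" where
  "I_system sc I H eta del \<longleftrightarrow>
    (\<forall>i\<in>I. \<forall>j\<in>I. \<forall>n. i \<le> j \<longrightarrow> submodule sc (H i j n)) \<and>
    (\<forall>i\<in>I. \<forall>j\<in>I. \<forall>i'\<in>I. \<forall>j'\<in>I. \<forall>n. i \<le> j \<and> i' \<le> j' \<and> i \<le> i' \<and> j \<le> j' \<longrightarrow>
        linmap sc (H i j n) (H i' j' n) (eta i j i' j' n)) \<and>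
    (\<forall>i\<in>I. \<forall>j\<in>I. \<forall>n. \<forall>x\<in>H i j n. i \<le> j \<longrightarrow> eta i j i j n x = x) \<and>
    (\<forall>i\<in>I. \<forall>j\<in>I. \<forall>i'\<in>I. \<forall>j'\<in>I. \<forall>i''\<in>I. \<forall>j''\<in>I. \<forall>n. \<forall>x\<in>H i j n.
        i \<le> j \<and> i' \<le> j' \<and> i'' \<le> j'' \<and> i \<le> i' \<and> j \<le> j' \<and> i' \<le> i'' \<and> j' \<le> j'' \<longrightarrow>
        eta i' j' i'' j'' n (eta i j i' j' n x) = eta i j i'' j'' n x) \<and>
    (\<forall>i\<in>I. \<forall>j\<in>I. \<forall>k\<in>I. \<forall>n. i \<le> j \<and> j \<le> k \<longrightarrow>
        linmap sc (H j k n) (H i j (n - 1)) (del i j k n)) \<and>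
    (\<forall>i\<in>I. \<forall>j\<in>I. \<forall>k\<in>I. \<forall>i'\<in>I. \<forall>j'\<in>I. \<forall>k'\<in>I. \<forall>n. \<forall>x\<in>H j k n.
        i \<le> j \<and> j \<le> k \<and> i' \<le> j' \<and> j' \<le> k' \<and> i \<le> i' \<and> j \<le> j' \<and> k \<le> k' \<longrightarrow>
        eta i j i' j' (n - 1) (del i j k n x) = del i' j' k' n (eta j k j' k' n x)) \<and>
    (\<forall>i\<in>I. \<forall>j\<in>I. \<forall>k\<in>I. \<forall>n. i \<le> j \<and> j \<le> k \<longrightarrow>
        exact_at (H i j n) (H i k n) (eta i j i k n) (eta i k j k n) \<and>
        exact_at (H i k n) (H j k n) (eta i k j k n) (del i j k n) \<and>
        exact_at (H j k n) (H i j (n - 1)) (del i j k n) (eta i j i k (n - 1)))"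

definition colim_rel :: "'i::linorder set \<Rightarrow> ('i \<Rightarrow> 'm set) \<Rightarrow> ('i \<Rightarrow> 'i \<Rightarrow> 'm \<Rightarrow> 'm)
    \<Rightarrow> ('i \<times> 'm) rel" where
  "colim_rel J C f = {((a, x), (b, y)). a \<in> J \<and> b \<in> J \<and> x \<in> C a \<and> y \<in> C b \<and>
      (\<exists>c\<in>J. a \<le> c \<and> b \<le> c \<and> f a c x = f b c y)}"

definition colim :: "'i::linorder set \<Rightarrow> ('i \<Rightarrow> 'm set) \<Rightarrow> ('i \<Rightarrow> 'i \<Rightarrow> 'm \<Rightarrow> 'm)
    \<Rightarrow> ('i \<times> 'm) set set" where
  "colim J C f = (SIGMA a:J. C a) // colim_rel J C f"

text \<open>The map out of the colimit induced by a compatible cocone g a : C a \<rightarrow> T.\<close>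
definition colim_map :: "('i \<Rightarrow> 'm \<Rightarrow> 'n) \<Rightarrow> ('i \<times> 'm) set \<Rightarrow> 'n" where
  "colim_map g X = the_elem ((\<lambda>(a, x). g a x) ` X)"

definition colim_zero :: "'i::linorder set \<Rightarrow> ('i \<Rightarrow> 'm set) \<Rightarrow> ('i \<Rightarrow> 'i \<Rightarrow> 'm \<Rightarrow> 'm) \<Rightarrow> bool" where
  "colim_zero J C f \<longleftrightarrow> (\<forall>X\<in>colim J C f. \<forall>Y\<in>colim J C f. X = Y)"

definition right_couple_conv_cond ::
  "(ext \<Rightarrow> ext \<Rightarrow> int \<Rightarrow> 'm::zero set) \<Rightarrow> (ext \<Rightarrow> ext \<Rightarrow> ext \<Rightarrow> ext \<Rightarrow> int \<Rightarrow> 'm \<Rightarrow> 'm) \<Rightarrow> bool" where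
  "right_couple_conv_cond H eta \<longleftrightarrow>
     (\<forall>n. colim_zero (range Fin) (\<lambda>s. H s PosInf n) (\<lambda>s t. eta s PosInf t PosInf n))"

definition eta_bar_iso ::
  "(ext \<Rightarrow> ext \<Rightarrow> int \<Rightarrow> 'm set) \<Rightarrow> (ext \<Rightarrow> ext \<Rightarrow> ext \<Rightarrow> ext \<Rightarrow> int \<Rightarrow> 'm \<Rightarrow> 'm) \<Rightarrow> ext \<Rightarrow> bool" where
  "eta_bar_iso H eta i \<longleftrightarrow>
     (\<forall>n. bij_betw (colim_map (\<lambda>j. eta i j i PosInf n))
            (colim {j \<in> range Fin. i \<le> j} (\<lambda>j. H i j n) (\<lambda>j j'. eta i j i j' n))
            (H i PosInf n))"

end

theory Submission imports Defs begin

locale dsys =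
  fixes J :: "'i::linorder set" and C :: "'i \<Rightarrow> 'm::ab_group_add set" and f :: "'i \<Rightarrow> 'i \<Rightarrow> 'm \<Rightarrow> 'm"
  assumes fC: "\<And>a b x. a \<in> J \<Longrightarrow> b \<in> J \<Longrightarrow> a \<le> b \<Longrightarrow> x \<in> C a \<Longrightarrow> f a b x \<in> C b"
    and fcomp: "\<And>a b c x. a \<in> J \<Longrightarrow> b \<in> J \<Longrightarrow> c \<in> J \<Longrightarrow> a \<le> b \<Longrightarrow> b \<le> c \<Longrightarrow> x \<in> C a
        \<Longrightarrow> f b c (f a b x) = f a c x"
begin

lemma equiv: "equiv (SIGMA a:J. C a) (colim_rel J C f)"
proof (rule equivI)
  show "colim_rel J C f \<subseteq> (SIGMA a:J. C a) \<times> (SIGMA a:J. C a)"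
    unfolding colim_rel_def by auto
  show "refl_on (SIGMA a:J. C a) (colim_rel J C f)"
    unfolding refl_on_def colim_rel_def by auto
  show "sym (colim_rel J C f)"
    unfolding sym_def colim_rel_def by auto
  show "trans (colim_rel J C f)"
  proof (rule transI)
    fix p q r assume pq: "(p, q) \<in> colim_rel J C f" and qr: "(q, r) \<in> colim_rel J C f"
    obtain a x b y d z where e: "p = (a,x)" "q = (b,y)" "r = (d,z)" by (cases p, cases q, cases r) auto
    from pq e obtain c where c: "a \<in> J" "b \<in> J" "x \<in> C a" "y \<in> C b" "c \<in> J" "a \<le> c" "b \<le> c" "f a c x = f b c y"
      unfolding colim_rel_def by auto
    from qr e obtain c' where c': "d \<in> J" "z \<in> C d" "c' \<in> J" "b \<le> c'" "d \<le> c'" "f b c' y = f d c' z"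
      unfolding colim_rel_def by auto
    define m where "m = max c c'"
    have m: "m \<in> J" "c \<le> m" "c' \<le> m" unfolding m_def using c c' by (auto simp: max_def)
    have "f a m x = f c m (f a c x)" using fcomp[of a c m x] c m by simp
    also have "\<dots> = f c m (f b c y)" using c by simp
    also have "\<dots> = f b m y" using fcomp[of b c m y] c m by simp
    also have "\<dots> = f c' m (f b c' y)" using fcomp[of b c' m y] c c' m by simp
    also have "\<dots> = f c' m (f d c' z)" using c' by simp
    also have "\<dots> = f d m z" using fcomp[of d c' m z] c' m by simp
    finally have "f a m x = f d m z" .
    moreover have "a \<le> m" "d \<le> m" using order.trans[OF c(6) m(2)] order.trans[OF c'(5) m(3)] by auto
    ultimately show "(p, r) \<in> colim_rel J C f" unfolding colim_rel_def e using c c' m by blast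
  qed
qed

lemma rel_iff: "((a,x),(b,y)) \<in> colim_rel J C f \<longleftrightarrow> a \<in> J \<and> b \<in> J \<and> x \<in> C a \<and> y \<in> C b \<and>
      (\<exists>c\<in>J. a \<le> c \<and> b \<le> c \<and> f a c x = f b c y)"
  unfolding colim_rel_def by auto

lemma zero_iff:
  assumes f0: "\<And>a b. a \<in> J \<Longrightarrow> b \<in> J \<Longrightarrow> a \<le> b \<Longrightarrow> f a b 0 = 0"
    and C0: "\<And>a. a \<in> J \<Longrightarrow> 0 \<in> C a"
  shows "colim_zero J C f \<longleftrightarrow> (\<forall>a\<in>J. \<forall>x\<in>C a. \<exists>c\<in>J. a \<le> c \<and> f a c x = 0)"
proof
  assume z: "colim_zero J C f"
  show "\<forall>a\<in>J. \<forall>x\<in>C a. \<exists>c\<in>J. a \<le> c \<and> f a c x = 0"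
  proof (intro ballI)
    fix a x assume a: "a \<in> J" "x \<in> C a"
    have m1: "colim_rel J C f `` {(a,x)} \<in> colim J C f"
      unfolding colim_def by (rule quotientI) (simp add: a)
    have m2: "colim_rel J C f `` {(a,0)} \<in> colim J C f"
      unfolding colim_def by (rule quotientI) (simp add: a C0)
    have "colim_rel J C f `` {(a,x)} = colim_rel J C f `` {(a,0)}"
      using z m1 m2 unfolding colim_zero_def by simp
    hence "((a,x),(a,0)) \<in> colim_rel J C f" using eq_equiv_class_iff[OF equiv, of "(a,x)" "(a,0)"] a C0 by simp
    then obtain c where "c \<in> J" "a \<le> c" "f a c x = f a c 0" unfolding rel_iff by blast
    then show "\<exists>c\<in>J. a \<le> c \<and> f a c x = 0" using f0[of a c] a by auto
  qed
next
  assume h: "\<forall>a\<in>J. \<forall>x\<in>C a. \<exists>c\<in>J. a \<le> c \<and> f a c x = 0"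
  have rel: "((a,x),(b,y)) \<in> colim_rel J C f" if ab: "a \<in> J" "x \<in> C a" "b \<in> J" "y \<in> C b" for a x b y
  proof -
    obtain c where c: "c \<in> J" "a \<le> c" "f a c x = 0" using bspec[OF bspec[OF h ab(1)] ab(2)] by blast
    obtain c' where c': "c' \<in> J" "b \<le> c'" "f b c' y = 0" using bspec[OF bspec[OF h ab(3)] ab(4)] by blast
    define m where "m = max c c'"
    have m: "m \<in> J" "c \<le> m" "c' \<le> m" unfolding m_def using c c' by (auto simp: max_def)
    have am: "a \<le> m" by (rule order.trans[OF c(2) m(2)])
    have bm: "b \<le> m" by (rule order.trans[OF c'(2) m(3)])
    have "f a m x = f c m (f a c x)" by (rule sym, rule fcomp[OF ab(1) c(1) m(1) c(2) m(2) ab(2)])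
    also have "\<dots> = 0" unfolding c(3) by (rule f0[OF c(1) m(1) m(2)])
    finally have "f a m x = 0" .
    moreover have "f b m y = f c' m (f b c' y)" by (rule sym, rule fcomp[OF ab(3) c'(1) m(1) c'(2) m(3) ab(4)])
    moreover have "f c' m (f b c' y) = 0" unfolding c'(3) by (rule f0[OF c'(1) m(1) m(3)])
    moreover note am bm
    ultimately show ?thesis unfolding rel_iff using ab m(1) by auto
  qed
  show "colim_zero J C f" unfolding colim_zero_def colim_def
  proof (intro ballI)
    fix X Y assume "X \<in> (SIGMA a:J. C a) // colim_rel J C f" "Y \<in> (SIGMA a:J. C a) // colim_rel J C f"
    then obtain p q where pq: "p \<in> (SIGMA a:J. C a)" "q \<in> (SIGMA a:J. C a)"
      "X = colim_rel J C f `` {p}" "Y = colim_rel J C f `` {q}" by (metis quotientE)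
    obtain a x b y where ab: "p = (a,x)" "q = (b,y)" by fastforce
    have "(p,q) \<in> colim_rel J C f" using pq(1,2) rel[of a x b y] unfolding ab by simp
    then show "X = Y" using eq_equiv_class_iff[OF equiv pq(1,2)] pq(3,4) by simp
  qed
qed

lemma map_class:
  assumes compat: "\<And>a c x. a \<in> J \<Longrightarrow> c \<in> J \<Longrightarrow> a \<le> c \<Longrightarrow> x \<in> C a \<Longrightarrow> g c (f a c x) = g a x"
    and "a \<in> J" "x \<in> C a"
  shows "colim_map g (colim_rel J C f `` {(a,x)}) = g a x"
proof -
  have "(\<lambda>(b, y). g b y) ` (colim_rel J C f `` {(a,x)}) = {g a x}"
  proof
    show "(\<lambda>(b, y). g b y) ` (colim_rel J C f `` {(a,x)}) \<subseteq> {g a x}"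
    proof
      fix t assume "t \<in> (\<lambda>(b, y). g b y) ` (colim_rel J C f `` {(a,x)})"
      then obtain b y where "((a,x),(b,y)) \<in> colim_rel J C f" "t = g b y" by auto
      then obtain c where "b \<in> J" "y \<in> C b" "c \<in> J" "a \<le> c" "b \<le> c" "f a c x = f b c y" "t = g b y"
        unfolding rel_iff by auto
      then show "t \<in> {g a x}" using compat[of a c x] compat[of b c y] assms by auto
    qed
    show "{g a x} \<subseteq> (\<lambda>(b, y). g b y) ` (colim_rel J C f `` {(a,x)})"
      using assms by (auto intro!: image_eqI[of _ _ "(a,x)"] simp: rel_iff)
  qed
  then show ?thesis unfolding colim_map_def by simp
qed

lemma bij_iff:
  assumes compat: "\<And>a c x. a \<in> J \<Longrightarrow> c \<in> J \<Longrightarrow> a \<le> c \<Longrightarrow> x \<in> C a \<Longrightarrow> g c (f a c x) = g a x"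
    and gT: "\<And>a x. a \<in> J \<Longrightarrow> x \<in> C a \<Longrightarrow> g a x \<in> T"
  shows "bij_betw (colim_map g) (colim J C f) T \<longleftrightarrow>
     (\<forall>t\<in>T. \<exists>a\<in>J. \<exists>x\<in>C a. g a x = t) \<and>
     (\<forall>a\<in>J. \<forall>x\<in>C a. \<forall>b\<in>J. \<forall>y\<in>C b. g a x = g b y \<longrightarrow> ((a,x),(b,y)) \<in> colim_rel J C f)"
    (is "?L \<longleftrightarrow> ?S \<and> ?I")
proof -
  have mc: "colim_map g (colim_rel J C f `` {(a,x)}) = g a x" if "a \<in> J" "x \<in> C a" for a x
    apply (rule map_class)
    apply (rule compat; assumption)
    using that by auto
  have cls: "colim J C f = {colim_rel J C f `` {(a,x)} |a x. a \<in> J \<and> x \<in> C a}"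
    unfolding colim_def quotient_def by auto
  have img: "colim_map g ` colim J C f = {g a x |a x. a \<in> J \<and> x \<in> C a}"
  proof (intro equalityI subsetI)
    fix t assume "t \<in> colim_map g ` colim J C f"
    then obtain a x where ax: "a \<in> J" "x \<in> C a" "t = colim_map g (colim_rel J C f `` {(a,x)})"
      unfolding cls by blast
    then have "t = g a x" using mc[OF ax(1,2)] by simp
    then show "t \<in> {g a x |a x. a \<in> J \<and> x \<in> C a}" using ax by blast
  next
    fix t assume "t \<in> {g a x |a x. a \<in> J \<and> x \<in> C a}"
    then obtain a x where ax: "a \<in> J" "x \<in> C a" "t = g a x" by blast
    then have "t = colim_map g (colim_rel J C f `` {(a,x)})" using mc[OF ax(1,2)] by simp
    moreover have "colim_rel J C f `` {(a,x)} \<in> colim J C f" unfolding cls using ax by blast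
    ultimately show "t \<in> colim_map g ` colim J C f" by blast
  qed
  have inj: "inj_on (colim_map g) (colim J C f) \<longleftrightarrow> ?I"
  proof
    assume i: "inj_on (colim_map g) (colim J C f)"
    show ?I
    proof (intro ballI impI)
      fix a x b y assume h: "a \<in> J" "x \<in> C a" "b \<in> J" "y \<in> C b" "g a x = g b y"
      have "colim_rel J C f `` {(a,x)} = colim_rel J C f `` {(b,y)}"
        proof -
        have "colim_rel J C f `` {(a,x)} \<in> colim J C f" "colim_rel J C f `` {(b,y)} \<in> colim J C f"
          unfolding cls using h by blast+
        moreover have "colim_map g (colim_rel J C f `` {(a,x)}) = colim_map g (colim_rel J C f `` {(b,y)})"
          using mc h by simp
        ultimately show ?thesis using i unfolding inj_on_def by blast
      qed
      then show "((a,x),(b,y)) \<in> colim_rel J C f" using eq_equiv_class_iff[OF equiv] h by auto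
    qed
  next
    assume i: ?I
    show "inj_on (colim_map g) (colim J C f)"
      unfolding inj_on_def cls
    proof (clarify)
      fix a x b y assume h: "a \<in> J" "x \<in> C a" "b \<in> J" "y \<in> C b"
        "colim_map g (colim_rel J C f `` {(a,x)}) = colim_map g (colim_rel J C f `` {(b,y)})"
      then have "g a x = g b y" using mc by simp
      then show "colim_rel J C f `` {(a,x)} = colim_rel J C f `` {(b,y)}"
        using eq_equiv_class_iff[OF equiv] h i by auto
    qed
  qed
  have surj: "colim_map g ` colim J C f = T \<longleftrightarrow> ?S"
    unfolding img using gT by (auto; metis)
  show ?thesis unfolding bij_betw_def inj surj by blast
qed

end

lemma linmap_facts:
  assumes "linmap sc M N f" "submodule sc M"
  shows "f 0 = 0" "\<And>x. x \<in> M \<Longrightarrow> f x \<in> N"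
    "\<And>x y. x \<in> M \<Longrightarrow> y \<in> M \<Longrightarrow> f (x - y) = f x - f y"
proof -
  have add: "\<And>x y. x \<in> M \<Longrightarrow> y \<in> M \<Longrightarrow> f (x + y) = f x + f y" and im: "f ` M \<subseteq> N"
    using assms(1) unfolding linmap_def by auto
  have z: "0 \<in> M" and cl: "\<And>x y. x \<in> M \<Longrightarrow> y \<in> M \<Longrightarrow> x + y \<in> M" and ng: "\<And>x. x \<in> M \<Longrightarrow> - x \<in> M"
    using assms(2) unfolding submodule_def by auto
  have "f 0 = f (0 + 0)" by simp
  also have "\<dots> = f 0 + f 0" using add[OF z z] .
  finally show f0: "f 0 = 0" by simp
  show "\<And>x. x \<in> M \<Longrightarrow> f x \<in> N" using im by auto
  fix x y assume xy: "x \<in> M" "y \<in> M"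
  have "f y + f (- y) = f (y + - y)" using add[OF xy(2) ng[OF xy(2)]] by simp
  also have "\<dots> = 0" using f0 by simp
  finally have "f (- y) = - f y" by (simp add: add_eq_0_iff)
  then show "f (x - y) = f x - f y" using add[OF xy(1) ng[OF xy(2)]] by simp
qed

lemma le_PosInf[simp]: "(x::ext) \<le> PosInf" by (cases x) auto

lemma Fin_not_PosInf_le: "j \<in> range Fin \<Longrightarrow> j \<noteq> PosInf" by auto

lemma exists_Fin_above: "i \<noteq> PosInf \<Longrightarrow> \<exists>j\<in>range Fin. i \<le> j"
  by (cases i) (auto intro!: bexI[of _ "Fin 0"] bexI[of _ "Fin x" for x])

locale ce =
  fixes sc :: "'r::ring_1 \<Rightarrow> 'm::ab_group_add \<Rightarrow> 'm"
    and I :: "ext set"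
    and H :: "ext \<Rightarrow> ext \<Rightarrow> int \<Rightarrow> 'm set"
    and eta :: "ext \<Rightarrow> ext \<Rightarrow> ext \<Rightarrow> ext \<Rightarrow> int \<Rightarrow> 'm \<Rightarrow> 'm"
    and del :: "ext \<Rightarrow> ext \<Rightarrow> ext \<Rightarrow> int \<Rightarrow> 'm \<Rightarrow> 'm"
  assumes sys: "I_system sc I H eta del"
    and FinI: "\<And>k. Fin k \<in> I"
    and PosI: "PosInf \<in> I"
begin

lemmas S = sys[unfolded I_system_def]
lemmas A1 = S[THEN conjunct1]
lemmas A2 = S[THEN conjunct2, THEN conjunct1]
lemmas A4 = S[THEN conjunct2, THEN conjunct2, THEN conjunct2, THEN conjunct1]
lemmas A5 = S[THEN conjunct2, THEN conjunct2, THEN conjunct2, THEN conjunct2, THEN conjunct1]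
lemmas A6 = S[THEN conjunct2, THEN conjunct2, THEN conjunct2, THEN conjunct2, THEN conjunct2, THEN conjunct1]
lemmas A7 = S[THEN conjunct2, THEN conjunct2, THEN conjunct2, THEN conjunct2, THEN conjunct2, THEN conjunct2]

lemma rI: "j \<in> range Fin \<Longrightarrow> j \<in> I" using FinI by auto

lemma sub: "i \<in> I \<Longrightarrow> j \<in> I \<Longrightarrow> i \<le> j \<Longrightarrow> submodule sc (H i j n)"
  using A1 by blast

lemma zeroH: "i \<in> I \<Longrightarrow> j \<in> I \<Longrightarrow> i \<le> j \<Longrightarrow> 0 \<in> H i j n"
  using sub unfolding submodule_def by blast

lemma lin: "i \<in> I \<Longrightarrow> j \<in> I \<Longrightarrow> i' \<in> I \<Longrightarrow> j' \<in> I \<Longrightarrow> i \<le> j \<Longrightarrow> i' \<le> j' \<Longrightarrow> i \<le> i' \<Longrightarrow> j \<le> j'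
   \<Longrightarrow> linmap sc (H i j n) (H i' j' n) (eta i j i' j' n)"
  using A2 by blast

lemma etaH: "i \<in> I \<Longrightarrow> j \<in> I \<Longrightarrow> i' \<in> I \<Longrightarrow> j' \<in> I \<Longrightarrow> i \<le> j \<Longrightarrow> i' \<le> j' \<Longrightarrow> i \<le> i' \<Longrightarrow> j \<le> j'
   \<Longrightarrow> x \<in> H i j n \<Longrightarrow> eta i j i' j' n x \<in> H i' j' n"
  using linmap_facts(2)[OF lin sub] by blast

lemma eta0: "i \<in> I \<Longrightarrow> j \<in> I \<Longrightarrow> i' \<in> I \<Longrightarrow> j' \<in> I \<Longrightarrow> i \<le> j \<Longrightarrow> i' \<le> j' \<Longrightarrow> i \<le> i' \<Longrightarrow> j \<le> j'
   \<Longrightarrow> eta i j i' j' n 0 = 0"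
  using linmap_facts(1)[OF lin sub] by blast

lemma eta_diff: "i \<in> I \<Longrightarrow> j \<in> I \<Longrightarrow> i' \<in> I \<Longrightarrow> j' \<in> I \<Longrightarrow> i \<le> j \<Longrightarrow> i' \<le> j' \<Longrightarrow> i \<le> i' \<Longrightarrow> j \<le> j'
   \<Longrightarrow> x \<in> H i j n \<Longrightarrow> y \<in> H i j n \<Longrightarrow> eta i j i' j' n (x - y) = eta i j i' j' n x - eta i j i' j' n y"
  using linmap_facts(3)[OF lin sub] by blast

lemma diffH: "i \<in> I \<Longrightarrow> j \<in> I \<Longrightarrow> i \<le> j \<Longrightarrow> x \<in> H i j n \<Longrightarrow> y \<in> H i j n \<Longrightarrow> x - y \<in> H i j n"
  using sub[of i j n] unfolding submodule_def by (metis diff_conv_add_uminus)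

lemma comp: "i \<in> I \<Longrightarrow> j \<in> I \<Longrightarrow> i' \<in> I \<Longrightarrow> j' \<in> I \<Longrightarrow> i'' \<in> I \<Longrightarrow> j'' \<in> I \<Longrightarrow>
   i \<le> j \<Longrightarrow> i' \<le> j' \<Longrightarrow> i'' \<le> j'' \<Longrightarrow> i \<le> i' \<Longrightarrow> j \<le> j' \<Longrightarrow> i' \<le> i'' \<Longrightarrow> j' \<le> j'' \<Longrightarrow>
   x \<in> H i j n \<Longrightarrow> eta i' j' i'' j'' n (eta i j i' j' n x) = eta i j i'' j'' n x"
  using A4 by blast

lemma dlin: "i \<in> I \<Longrightarrow> j \<in> I \<Longrightarrow> k \<in> I \<Longrightarrow> i \<le> j \<Longrightarrow> j \<le> k \<Longrightarrow>
   linmap sc (H j k n) (H i j (n - 1)) (del i j k n)"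
  using A5 by blast

lemma del0: "i \<in> I \<Longrightarrow> j \<in> I \<Longrightarrow> k \<in> I \<Longrightarrow> i \<le> j \<Longrightarrow> j \<le> k \<Longrightarrow> del i j k n 0 = 0"
  using linmap_facts(1)[OF dlin sub] by blast

lemma delH: "i \<in> I \<Longrightarrow> j \<in> I \<Longrightarrow> k \<in> I \<Longrightarrow> i \<le> j \<Longrightarrow> j \<le> k \<Longrightarrow> x \<in> H j k n \<Longrightarrow> del i j k n x \<in> H i j (n - 1)"
  using linmap_facts(2)[OF dlin sub] by blast

lemma natur: "i \<in> I \<Longrightarrow> j \<in> I \<Longrightarrow> k \<in> I \<Longrightarrow> i' \<in> I \<Longrightarrow> j' \<in> I \<Longrightarrow> k' \<in> I \<Longrightarrow>
   i \<le> j \<Longrightarrow> j \<le> k \<Longrightarrow> i' \<le> j' \<Longrightarrow> j' \<le> k' \<Longrightarrow> i \<le> i' \<Longrightarrow> j \<le> j' \<Longrightarrow> k \<le> k' \<Longrightarrow>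
   x \<in> H j k n \<Longrightarrow> eta i j i' j' (n - 1) (del i j k n x) = del i' j' k' n (eta j k j' k' n x)"
  using A6 by blast

lemma exs: "i \<in> I \<Longrightarrow> j \<in> I \<Longrightarrow> k \<in> I \<Longrightarrow> i \<le> j \<Longrightarrow> j \<le> k \<Longrightarrow>
        exact_at (H i j n) (H i k n) (eta i j i k n) (eta i k j k n) \<and>
        exact_at (H i k n) (H j k n) (eta i k j k n) (del i j k n) \<and>
        exact_at (H j k n) (H i j (n - 1)) (del i j k n) (eta i j i k (n - 1))"
  using A7 by blast

lemma ex1_img: "i \<in> I \<Longrightarrow> j \<in> I \<Longrightarrow> k \<in> I \<Longrightarrow> i \<le> j \<Longrightarrow> j \<le> k \<Longrightarrow> y \<in> H i j n \<Longrightarrow>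
   eta i k j k n (eta i j i k n y) = 0"
  using exs[of i j k n] unfolding exact_at_def by blast

lemma ex1_ker: "i \<in> I \<Longrightarrow> j \<in> I \<Longrightarrow> k \<in> I \<Longrightarrow> i \<le> j \<Longrightarrow> j \<le> k \<Longrightarrow> x \<in> H i k n \<Longrightarrow>
   eta i k j k n x = 0 \<Longrightarrow> \<exists>y\<in>H i j n. x = eta i j i k n y"
  using exs[of i j k n] unfolding exact_at_def by blast

lemma ex2_ker: "i \<in> I \<Longrightarrow> j \<in> I \<Longrightarrow> k \<in> I \<Longrightarrow> i \<le> j \<Longrightarrow> j \<le> k \<Longrightarrow> x \<in> H j k n \<Longrightarrow>
   del i j k n x = 0 \<Longrightarrow> \<exists>y\<in>H i k n. x = eta i k j k n y"
  using exs[of i j k n] unfolding exact_at_def by blast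

lemma ex3_img: "i \<in> I \<Longrightarrow> j \<in> I \<Longrightarrow> k \<in> I \<Longrightarrow> i \<le> j \<Longrightarrow> j \<le> k \<Longrightarrow> y \<in> H j k n \<Longrightarrow>
   eta i j i k (n - 1) (del i j k n y) = 0"
  using exs[of i j k n] unfolding exact_at_def by blast

lemma ex3_ker: "i \<in> I \<Longrightarrow> j \<in> I \<Longrightarrow> k \<in> I \<Longrightarrow> i \<le> j \<Longrightarrow> j \<le> k \<Longrightarrow> x \<in> H i j (n - 1) \<Longrightarrow>
   eta i j i k (n - 1) x = 0 \<Longrightarrow> \<exists>y\<in>H j k n. x = del i j k n y"
  using exs[of i j k n] unfolding exact_at_def by blast

end


context ce begin

abbreviation Jset :: "ext \<Rightarrow> ext set" where "Jset i \<equiv> {j \<in> range Fin. i \<le> j}"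

abbreviation Vp :: "int \<Rightarrow> bool" where
  "Vp n \<equiv> (\<forall>a\<in>range Fin. \<forall>x\<in>H a PosInf n. \<exists>c\<in>range Fin. a \<le> c \<and> eta a PosInf c PosInf n x = 0)"

abbreviation Sp :: "ext \<Rightarrow> int \<Rightarrow> bool" where
  "Sp i n \<equiv> (\<forall>t\<in>H i PosInf n. \<exists>a\<in>Jset i. \<exists>x\<in>H i a n. eta i a i PosInf n x = t)"

abbreviation Rp :: "ext \<Rightarrow> int \<Rightarrow> bool" where
  "Rp i n \<equiv> (\<forall>a\<in>Jset i. \<forall>x\<in>H i a n. \<forall>b\<in>Jset i. \<forall>y\<in>H i b n.
      eta i a i PosInf n x = eta i b i PosInf n y \<longrightarrow>
      ((a,x),(b,y)) \<in> colim_rel (Jset i) (\<lambda>j. H i j n) (\<lambda>j j'. eta i j i j' n))"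

lemma max_in: "a \<in> range Fin \<Longrightarrow> b \<in> range Fin \<Longrightarrow> max a b \<in> range Fin"
  by (auto simp: max_def)

lemma L1:
  assumes i: "i \<in> I" "i \<noteq> PosInf" and V: "Vp n"
  shows "Sp i n"
proof
  fix t assume t: "t \<in> H i PosInf n"
  obtain j where j: "j \<in> range Fin" "i \<le> j" using exists_Fin_above[OF i(2)] by blast
  have jI: "j \<in> I" using rI[OF j(1)] .
  have u: "eta i PosInf j PosInf n t \<in> H j PosInf n"
    using etaH[OF i(1) PosI jI PosI le_PosInf le_PosInf j(2) order.refl t] .
  obtain c where c: "c \<in> range Fin" "j \<le> c" "eta j PosInf c PosInf n (eta i PosInf j PosInf n t) = 0"
    using V j(1) u by blast
  have cI: "c \<in> I" using rI[OF c(1)] .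
  have ic: "i \<le> c" using order.trans[OF j(2) c(2)] .
  have "eta i PosInf c PosInf n t = 0"
    using c(3) comp[OF i(1) PosI jI PosI cI PosI le_PosInf le_PosInf le_PosInf j(2) order.refl c(2) order.refl t]
    by simp
  then obtain x where "x \<in> H i c n" "t = eta i c i PosInf n x"
    using ex1_ker[OF i(1) cI PosI ic le_PosInf t] by blast
  then show "\<exists>a\<in>Jset i. \<exists>x\<in>H i a n. eta i a i PosInf n x = t" using c(1) ic by blast
qed

lemma L2:
  assumes i: "i \<in> I" "i \<noteq> PosInf" and V: "Vp (n + 1)"
  shows "Rp i n"
proof (intro ballI impI)
  fix a x b y assume a: "a \<in> Jset i" and x: "x \<in> H i a n" and b: "b \<in> Jset i" and y: "y \<in> H i b n"
    and e: "eta i a i PosInf n x = eta i b i PosInf n y"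
  define c where "c = max a b"
  have c: "c \<in> range Fin" "a \<le> c" "b \<le> c" using a b max_in unfolding c_def by auto
  have aI: "a \<in> I" using a rI by auto
  have bI: "b \<in> I" using b rI by auto
  have cI: "c \<in> I" using c rI by auto
  have ia: "i \<le> a" and ib: "i \<le> b" using a b by auto
  have ic: "i \<le> c" using order.trans[OF ia c(2)] .
  define x' where "x' = eta i a i c n x"
  define y' where "y' = eta i b i c n y"
  have x'H: "x' \<in> H i c n" unfolding x'_def using etaH[OF i(1) aI i(1) cI ia ic order.refl c(2) x] .
  have y'H: "y' \<in> H i c n" unfolding y'_def using etaH[OF i(1) bI i(1) cI ib ic order.refl c(3) y] .
  have ex': "eta i c i PosInf n x' = eta i a i PosInf n x"
    unfolding x'_def using comp[OF i(1) aI i(1) cI i(1) PosI ia ic le_PosInf order.refl c(2) order.refl le_PosInf x] .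
  have ey': "eta i c i PosInf n y' = eta i b i PosInf n y"
    unfolding y'_def using comp[OF i(1) bI i(1) cI i(1) PosI ib ic le_PosInf order.refl c(3) order.refl le_PosInf y] .
  define z where "z = x' - y'"
  have zH: "z \<in> H i c ((n + 1) - 1)" unfolding z_def using diffH[OF i(1) cI ic x'H y'H] by simp
  have ez: "eta i c i PosInf ((n + 1) - 1) z = 0"
    unfolding z_def using eta_diff[OF i(1) cI i(1) PosI ic le_PosInf order.refl le_PosInf x'H y'H] ex' ey' e
    by simp
  obtain w where w: "w \<in> H c PosInf (n + 1)" "z = del i c PosInf (n + 1) w"
    using ex3_ker[OF i(1) cI PosI ic le_PosInf zH ez] by blast
  obtain d where d: "d \<in> range Fin" "c \<le> d" "eta c PosInf d PosInf (n + 1) w = 0"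
    using V c(1) w(1) by blast
  have dI: "d \<in> I" using d rI by auto
  have id: "i \<le> d" using order.trans[OF ic d(2)] .
  have "eta i c i d ((n + 1) - 1) z = del i d PosInf (n + 1) (eta c PosInf d PosInf (n + 1) w)"
    unfolding w(2) using natur[OF i(1) cI PosI i(1) dI PosI ic le_PosInf id le_PosInf order.refl d(2) order.refl w(1)] .
  also have "\<dots> = 0" using d(3) del0[OF i(1) dI PosI id le_PosInf] by simp
  finally have "eta i c i d n z = 0" by simp
  then have "eta i c i d n x' = eta i c i d n y'"
    unfolding z_def using eta_diff[OF i(1) cI i(1) dI ic id order.refl d(2) x'H y'H] by simp
  moreover have "eta i c i d n x' = eta i a i d n x"
    unfolding x'_def using comp[OF i(1) aI i(1) cI i(1) dI ia ic id order.refl c(2) order.refl d(2) x] .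
  moreover have "eta i c i d n y' = eta i b i d n y"
    unfolding y'_def using comp[OF i(1) bI i(1) cI i(1) dI ib ic id order.refl c(3) order.refl d(2) y] .
  ultimately have "eta i a i d n x = eta i b i d n y" by simp
  moreover have "d \<in> Jset i" using d(1) id by blast
  moreover have "a \<le> d" "b \<le> d" using order.trans[OF c(2) d(2)] order.trans[OF c(3) d(2)] by auto
  ultimately show "((a,x),(b,y)) \<in> colim_rel (Jset i) (\<lambda>j. H i j n) (\<lambda>j j'. eta i j i j' n)"
    unfolding colim_rel_def using a b x y by blast
qed

end


context ce begin

lemma L3:
  assumes i: "i \<in> I" "i \<noteq> PosInf" and Sur: "Sp i n" and R: "Rp i (n - 1)"
  shows "Vp n"
proof (intro ballI)
  fix s y assume s: "s \<in> range Fin" and y: "y \<in> H s PosInf n"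
  obtain j0 where j0: "j0 \<in> range Fin" "i \<le> j0" using exists_Fin_above[OF i(2)] by blast
  define s' where "s' = max s j0"
  have s': "s' \<in> range Fin" "s \<le> s'" "j0 \<le> s'" using max_in[OF s j0(1)] unfolding s'_def by auto
  have is': "i \<le> s'" using order.trans[OF j0(2) s'(3)] .
  have sI: "s \<in> I" using s rI by auto
  have s'I: "s' \<in> I" using s' rI by auto
  define y' where "y' = eta s PosInf s' PosInf n y"
  have y'H: "y' \<in> H s' PosInf n" unfolding y'_def
    using etaH[OF sI PosI s'I PosI le_PosInf le_PosInf s'(2) order.refl y] .
  define z where "z = del i s' PosInf n y'"
  have zH: "z \<in> H i s' (n - 1)" unfolding z_def using delH[OF i(1) s'I PosI is' le_PosInf y'H] .
  have ez: "eta i s' i PosInf (n - 1) z = 0" unfolding z_def using ex3_img[OF i(1) s'I PosI is' le_PosInf y'H] .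
  have s'J: "s' \<in> Jset i" using s'(1) is' by blast
  have z0: "(0::'m) \<in> H i s' (n - 1)" using zeroH[OF i(1) s'I is'] .
  have e00: "eta i s' i PosInf (n - 1) 0 = 0" using eta0[OF i(1) s'I i(1) PosI is' le_PosInf order.refl le_PosInf] .
  have "((s',z),(s',0)) \<in> colim_rel (Jset i) (\<lambda>j. H i j (n - 1)) (\<lambda>j j'. eta i j i j' (n - 1))"
    using R s'J zH z0 ez e00 by auto
  then obtain d where d: "d \<in> Jset i" "s' \<le> d" "eta i s' i d (n - 1) z = eta i s' i d (n - 1) 0"
    unfolding colim_rel_def by blast
  have dI: "d \<in> I" using d(1) rI by auto
  have id: "i \<le> d" using d(1) by auto
  have ezd: "eta i s' i d (n - 1) z = 0" using d(3) eta0[OF i(1) s'I i(1) dI is' id order.refl d(2)] by simp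
  define w where "w = eta s' PosInf d PosInf n y'"
  have wH: "w \<in> H d PosInf n" unfolding w_def
    using etaH[OF s'I PosI dI PosI le_PosInf le_PosInf d(2) order.refl y'H] .
  have "del i d PosInf n w = eta i s' i d (n - 1) z"
    unfolding w_def z_def using natur[OF i(1) s'I PosI i(1) dI PosI is' le_PosInf id le_PosInf order.refl d(2) order.refl y'H]
    by simp
  with ezd have dw: "del i d PosInf n w = 0" by simp
  obtain h where h: "h \<in> H i PosInf n" "w = eta i PosInf d PosInf n h"
    using ex2_ker[OF i(1) dI PosI id le_PosInf wH dw] by blast
  obtain e x where e: "e \<in> Jset i" and x: "x \<in> H i e n" and hx: "eta i e i PosInf n x = h"
    using Sur h(1) by blast
  have eI: "e \<in> I" using e rI by auto
  have ie: "i \<le> e" using e by auto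
  define u where "u = max d e"
  have u: "u \<in> range Fin" "d \<le> u" "e \<le> u" using max_in d(1) e unfolding u_def by auto
  have uI: "u \<in> I" using u rI by auto
  have iu: "i \<le> u" using order.trans[OF id u(2)] .
  have su: "s \<le> u" using order.trans[OF s'(2) order.trans[OF d(2) u(2)]] .
  define x' where "x' = eta i e i u n x"
  have x'H: "x' \<in> H i u n" unfolding x'_def using etaH[OF i(1) eI i(1) uI ie iu order.refl u(3) x] .
  have hx': "eta i u i PosInf n x' = h" unfolding x'_def
    using comp[OF i(1) eI i(1) uI i(1) PosI ie iu le_PosInf order.refl u(3) order.refl le_PosInf x] hx by simp
  have h0: "eta i PosInf u PosInf n h = 0"
    using ex1_img[OF i(1) uI PosI iu le_PosInf x'H] hx' by simp
  have "eta d PosInf u PosInf n w = eta i PosInf u PosInf n h"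
    unfolding h(2) using comp[OF i(1) PosI dI PosI uI PosI le_PosInf le_PosInf le_PosInf id order.refl u(2) order.refl h(1)] .
  with h0 have wu: "eta d PosInf u PosInf n w = 0" by simp
  have "w = eta s PosInf d PosInf n y" unfolding w_def y'_def
    using comp[OF sI PosI s'I PosI dI PosI le_PosInf le_PosInf le_PosInf s'(2) order.refl d(2) order.refl y] .
  then have "eta s PosInf u PosInf n y = eta d PosInf u PosInf n w"
    using comp[OF sI PosI dI PosI uI PosI le_PosInf le_PosInf le_PosInf order.trans[OF s'(2) d(2)] order.refl u(2) order.refl y]
    by simp
  with wu have "eta s PosInf u PosInf n y = 0" by simp
  then show "\<exists>c\<in>range Fin. s \<le> c \<and> eta s PosInf c PosInf n y = 0" using u(1) su by blast
qed

end


context ce begin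

lemma conv_iff: "right_couple_conv_cond H eta \<longleftrightarrow> (\<forall>n. Vp n)"
proof -
  have "colim_zero (range Fin) (\<lambda>s. H s PosInf n) (\<lambda>s t. eta s PosInf t PosInf n) \<longleftrightarrow> Vp n" for n
  proof -
    interpret D: dsys "range Fin" "\<lambda>s. H s PosInf n" "\<lambda>s t. eta s PosInf t PosInf n"
    proof
      fix a b x assume "a \<in> range Fin" "b \<in> range Fin" "a \<le> b" "x \<in> H a PosInf n"
      then show "eta a PosInf b PosInf n x \<in> H b PosInf n"
        using etaH[of a PosInf b PosInf] rI PosI by auto
    next
      fix a b c x assume h: "a \<in> range Fin" "b \<in> range Fin" "c \<in> range Fin" "a \<le> b" "b \<le> c" "x \<in> H a PosInf n"
      show "eta b PosInf c PosInf n (eta a PosInf b PosInf n x) = eta a PosInf c PosInf n x"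
        using comp[OF rI[OF h(1)] PosI rI[OF h(2)] PosI rI[OF h(3)] PosI le_PosInf le_PosInf le_PosInf h(4) order.refl h(5) order.refl h(6)] .
    qed
    show ?thesis
    proof (rule D.zero_iff)
      fix a b assume "a \<in> range Fin" "b \<in> range Fin" "a \<le> b"
      then show "eta a PosInf b PosInf n 0 = 0" using eta0[of a PosInf b PosInf] rI PosI by auto
    next
      fix a assume "a \<in> range Fin"
      then show "0 \<in> H a PosInf n" using zeroH[of a PosInf] rI PosI by auto
    qed
  qed
  then show ?thesis unfolding right_couple_conv_cond_def by blast
qed

lemma iso_iff:
  assumes i: "i \<in> I" "i \<noteq> PosInf"
  shows "eta_bar_iso H eta i \<longleftrightarrow> (\<forall>n. Sp i n \<and> Rp i n)"
proof -
  have "bij_betw (colim_map (\<lambda>j. eta i j i PosInf n))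
            (colim (Jset i) (\<lambda>j. H i j n) (\<lambda>j j'. eta i j i j' n))
            (H i PosInf n) \<longleftrightarrow> Sp i n \<and> Rp i n" for n
  proof -
    interpret D: dsys "Jset i" "\<lambda>j. H i j n" "\<lambda>j j'. eta i j i j' n"
    proof
      fix a b x assume h: "a \<in> Jset i" "b \<in> Jset i" "a \<le> b" "x \<in> H i a n"
      then show "eta i a i b n x \<in> H i b n"
        using etaH[OF i(1) rI i(1) rI _ _ order.refl h(3) h(4)] by auto
    next
      fix a b c x assume h: "a \<in> Jset i" "b \<in> Jset i" "c \<in> Jset i" "a \<le> b" "b \<le> c" "x \<in> H i a n"
      show "eta i b i c n (eta i a i b n x) = eta i a i c n x"
        using comp[OF i(1) rI i(1) rI i(1) rI _ _ _ order.refl h(4) order.refl h(5) h(6)] h by auto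
    qed
    show ?thesis
    proof (rule D.bij_iff)
      fix a c x assume h: "a \<in> Jset i" "c \<in> Jset i" "a \<le> c" "x \<in> H i a n"
      show "eta i c i PosInf n (eta i a i c n x) = eta i a i PosInf n x"
        using comp[OF i(1) rI i(1) rI i(1) PosI _ _ le_PosInf order.refl h(3) order.refl le_PosInf h(4)] h by auto
    next
      fix a x assume h: "a \<in> Jset i" "x \<in> H i a n"
      show "eta i a i PosInf n x \<in> H i PosInf n"
        using etaH[OF i(1) rI i(1) PosI _ le_PosInf order.refl le_PosInf h(2)] h by auto
    qed
  qed
  then show ?thesis unfolding eta_bar_iso_def by blast
qed

lemma main:
  assumes ex: "Fin 0 \<in> I"
  shows "(right_couple_conv_cond H eta \<longleftrightarrow> (\<exists>i\<in>I - {PosInf}. eta_bar_iso H eta i))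
       \<and> (right_couple_conv_cond H eta \<longrightarrow> (\<forall>i\<in>I - {PosInf}. eta_bar_iso H eta i))"
proof -
  have A: "eta_bar_iso H eta i" if c: "right_couple_conv_cond H eta" and i: "i \<in> I - {PosInf}" for i
  proof -
    have V: "\<forall>n. Vp n" using c conv_iff by blast
    have "Sp i n \<and> Rp i n" for n using L1[of i n] L2[of i n] V i by blast
    then show ?thesis using iso_iff[of i] i by blast
  qed
  have B: "right_couple_conv_cond H eta" if i: "i \<in> I - {PosInf}" and e: "eta_bar_iso H eta i" for i
  proof -
    have SR: "\<forall>n. Sp i n \<and> Rp i n" using iso_iff[of i] i e by blast
    have "Vp n" for n using L3[of i n] SR i by blast
    then show ?thesis using conv_iff by blast
  qed
  have "Fin 0 \<in> I - {PosInf}" using ex by simp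
  then show ?thesis using A B by blast
qed

end

theorem proposition6p4:
  fixes sc :: "'r::ring_1 \<Rightarrow> 'm::ab_group_add \<Rightarrow> 'm"
    and I :: "ext set"
    and H :: "ext \<Rightarrow> ext \<Rightarrow> int \<Rightarrow> 'm set"
    and eta :: "ext \<Rightarrow> ext \<Rightarrow> ext \<Rightarrow> ext \<Rightarrow> int \<Rightarrow> 'm \<Rightarrow> 'm"
    and del :: "ext \<Rightarrow> ext \<Rightarrow> ext \<Rightarrow> int \<Rightarrow> 'm \<Rightarrow> 'm"
  assumes "is_module sc"
    and "I = right_index \<or> I = extended_index"
    and "I_system sc I H eta del"
  shows "(right_couple_conv_cond H eta \<longleftrightarrow> (\<exists>i\<in>I - {PosInf}. eta_bar_iso H eta i))
       \<and> (right_couple_conv_cond H eta \<longrightarrow> (\<forall>i\<in>I - {PosInf}. eta_bar_iso H eta i))"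
proof -
  have F: "\<And>k. Fin k \<in> I" and P: "PosInf \<in> I"
    using assms(2) unfolding right_index_def extended_index_def by auto
  interpret ce sc I H eta del using assms(3) F P by unfold_locales
  show ?thesis using main F by blast
qed

end
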